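(* Let $S=\{s_1,\dots,s_n\}$ be a finite poset whose Hasse graph $\Gamma(S)$ is acyclic (a forest), and suppose at least one of the forms $f_S$, $\mathcal T_S$ is positive definite. Then the other one is positive definite as well, and the following are equivalent: (a) $C(f_S)=\varnothing$ ($S$ is antimonotonous); (b) $\widetilde{\mathrm{St}}(f_S)\ne\varnothing$ ($S$ is $P$-faithful); (c) $\mathrm{St}(f_S)\ne\varnothing$.
   Context: $f_S(x)=\sum_{(i,j):\,s_i\le s_j}x_ix_j=\sum_i x_i^2+\sum_{s_i<s_j}x_ix_j$. The Hasse graph $\Gamma(S)$ has vertex set $S$ and an edge $s_i - s_j$ when one of them covers the other; the Tits form is $\mathcal T_S(x)=\sum_i x_i^2-\sum_{\text{edges } s_i - s_j}x_ix_j$. $H_n=\{x:\sum x_i=0\}$; $C(f)$ is the set of $h\in H_n\setminus\{0\}$ with either all $\partial f/\partial x_i(h)\le0$ or all $\ge0$. $\mathrm{St}(f)=\{a: a_i>0\ \forall i,\ \partial f/\partial x_i(a)$ independent of $i\}$. With $P_n=\{x:x_i>0,\sum x_i=1\}$ and $\overline P_n=\{x:x_i\ge0,\sum x_i=1\}$, $\widetilde{\mathrm{St}}(f)$ is the set of $u\in P_n$ with $f(u)>0$, $f(u)\le f(w)$ for all $w\in\overline P_n$, and $f(u)<f(w)$ for $w\in\overline P_n\setminus P_n$. *)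

theory Defs
  imports "HOL-Analysis.Analysis"
begin

text \<open>A finite poset S = {s_1,...,s_n} is modelled by a finite (nonempty) type 'a with a
  partial order relation le. Vectors in R^n are functions 'a => real.\<close>

definition is_poset :: "('a \<Rightarrow> 'a \<Rightarrow> bool) \<Rightarrow> bool" where
  "is_poset le \<longleftrightarrow> (\<forall>x. le x x) \<and> (\<forall>x y. le x y \<and> le y x \<longrightarrow> x = y)
     \<and> (\<forall>x y z. le x y \<and> le y z \<longrightarrow> le x z)"

definition f_S :: "('a::finite \<Rightarrow> 'a \<Rightarrow> bool) \<Rightarrow> ('a \<Rightarrow> real) \<Rightarrow> real" where
  "f_S le x = (\<Sum>i\<in>UNIV. \<Sum>j\<in>UNIV. if le i j then x i * x j else 0)"

definition covers :: "('a \<Rightarrow> 'a \<Rightarrow> bool) \<Rightarrow> 'a \<Rightarrow> 'a \<Rightarrow> bool" where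
  "covers le i j \<longleftrightarrow> le i j \<and> i \<noteq> j \<and> \<not> (\<exists>k. le i k \<and> le k j \<and> k \<noteq> i \<and> k \<noteq> j)"

definition hasse_edge :: "('a \<Rightarrow> 'a \<Rightarrow> bool) \<Rightarrow> 'a \<Rightarrow> 'a \<Rightarrow> bool" where
  "hasse_edge le i j \<longleftrightarrow> covers le i j \<or> covers le j i"

definition hasse_acyclic :: "('a \<Rightarrow> 'a \<Rightarrow> bool) \<Rightarrow> bool" where
  "hasse_acyclic le \<longleftrightarrow> \<not> (\<exists>vs. length vs \<ge> 3 \<and> distinct vs
      \<and> (\<forall>k < length vs - 1. hasse_edge le (vs ! k) (vs ! Suc k))
      \<and> hasse_edge le (last vs) (hd vs))"

text \<open>Tits form: sum x_i^2 minus sum over (unordered) Hasse edges of x_i x_j; each edge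
  s_i - s_j corresponds to exactly one covering pair (i,j) with s_j covering s_i.\<close>
definition tits_form :: "('a::finite \<Rightarrow> 'a \<Rightarrow> bool) \<Rightarrow> ('a \<Rightarrow> real) \<Rightarrow> real" where
  "tits_form le x = (\<Sum>i\<in>UNIV. (x i)\<^sup>2)
      - (\<Sum>i\<in>UNIV. \<Sum>j\<in>UNIV. if covers le i j then x i * x j else 0)"

definition pos_def :: "(('a \<Rightarrow> real) \<Rightarrow> real) \<Rightarrow> bool" where
  "pos_def f \<longleftrightarrow> (\<forall>x. x \<noteq> (\<lambda>_. 0) \<longrightarrow> f x > 0)"

definition pderiv_at :: "(('a \<Rightarrow> real) \<Rightarrow> real) \<Rightarrow> 'a \<Rightarrow> ('a \<Rightarrow> real) \<Rightarrow> real" where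
  "pderiv_at f i x = deriv (\<lambda>t. f (x(i := t))) (x i)"

definition H_n :: "('a::finite \<Rightarrow> real) set" where
  "H_n = {x. (\<Sum>i\<in>UNIV. x i) = 0}"

definition C_set :: "(('a::finite \<Rightarrow> real) \<Rightarrow> real) \<Rightarrow> ('a \<Rightarrow> real) set" where
  "C_set f = {h \<in> H_n - {\<lambda>_. 0}. (\<forall>i. pderiv_at f i h \<le> 0) \<or> (\<forall>i. pderiv_at f i h \<ge> 0)}"

definition St :: "(('a \<Rightarrow> real) \<Rightarrow> real) \<Rightarrow> ('a \<Rightarrow> real) set" where
  "St f = {a. (\<forall>i. a i > 0) \<and> (\<forall>i j. pderiv_at f i a = pderiv_at f j a)}"

definition P_n :: "('a::finite \<Rightarrow> real) set" where
  "P_n = {x. (\<forall>i. x i > 0) \<and> (\<Sum>i\<in>UNIV. x i) = 1}"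

definition P_n_closed :: "('a::finite \<Rightarrow> real) set" where
  "P_n_closed = {x. (\<forall>i. x i \<ge> 0) \<and> (\<Sum>i\<in>UNIV. x i) = 1}"

definition St_tilde :: "(('a::finite \<Rightarrow> real) \<Rightarrow> real) \<Rightarrow> ('a \<Rightarrow> real) set" where
  "St_tilde f = {u \<in> P_n. f u > 0 \<and> (\<forall>w\<in>P_n_closed. f u \<le> f w)
       \<and> (\<forall>w\<in>P_n_closed - P_n. f u < f w)}"

end

theory Submission
  imports Defs
begin


lemma poset_refl: "is_poset le \<Longrightarrow> le x x" unfolding is_poset_def by blast
lemma poset_antisym: "is_poset le \<Longrightarrow> le x y \<Longrightarrow> le y x \<Longrightarrow> x = y" unfolding is_poset_def by blast
lemma poset_trans: "is_poset le \<Longrightarrow> le x y \<Longrightarrow> le y z \<Longrightarrow> le x z" unfolding is_poset_def by blast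

lemma lower_cover_ex:
  fixes le :: "'a::finite \<Rightarrow> 'a \<Rightarrow> bool"
  assumes P: "is_poset le" and ik: "le i k" "i \<noteq> k"
  shows "\<exists>j. le i j \<and> covers le j k"
proof -
  let ?S = "{j. le i j \<and> le j k \<and> j \<noteq> k}"
  let ?m = "\<lambda>j. card {l. le j l \<and> le l k}"
  have "i \<in> ?S" using ik poset_refl[OF P] by blast
  then obtain j where j: "j \<in> ?S" "\<And>j'. j' \<in> ?S \<Longrightarrow> ?m j \<le> ?m j'"
    using ex_has_least_nat[of "\<lambda>j. j \<in> ?S" i ?m] by blast
  have "covers le j k"
    unfolding covers_def
  proof (intro conjI)
    show "le j k" "j \<noteq> k" using j(1) by auto
  next
    show "\<not> (\<exists>l. le j l \<and> le l k \<and> l \<noteq> j \<and> l \<noteq> k)"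
    proof
    assume "\<exists>l. le j l \<and> le l k \<and> l \<noteq> j \<and> l \<noteq> k"
    then obtain l where l: "le j l" "le l k" "l \<noteq> j" "l \<noteq> k" by blast
    have "l \<in> ?S" using l j(1) poset_trans[OF P] by blast
    have "{l'. le l l' \<and> le l' k} \<subset> {l'. le j l' \<and> le l' k}"
    proof
      show "{l'. le l l' \<and> le l' k} \<subseteq> {l'. le j l' \<and> le l' k}"
        using l poset_trans[OF P] by blast
      have "j \<notin> {l'. le l l' \<and> le l' k}" using l poset_antisym[OF P] by blast
      moreover have "j \<in> {l'. le j l' \<and> le l' k}" using j(1) poset_refl[OF P] by blast
      ultimately show "{l'. le l l' \<and> le l' k} \<noteq> {l'. le j l' \<and> le l' k}" by blast
    qed
    then have "?m l < ?m j" by (intro psubset_card_mono) auto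
    with j(2)[OF \<open>l \<in> ?S\<close>] show False by linarith
  qed
  qed
  then show ?thesis using j(1) by blast
qed

lemma sat_chain:
  fixes le :: "'a::finite \<Rightarrow> 'a \<Rightarrow> bool"
  assumes P: "is_poset le"
  shows "le x y \<Longrightarrow> \<exists>p. p \<noteq> [] \<and> hd p = x \<and> last p = y \<and> distinct p
     \<and> successively (covers le) p \<and> (\<forall>z\<in>set p. le x z \<and> le z y)"
proof (induction "card {l. le x l \<and> le l y}" arbitrary: y rule: less_induct)
  case less
  show ?case
  proof (cases "x = y")
    case True
    then show ?thesis using less.prems poset_refl[OF P] by (intro exI[of _ "[x]"]) auto
  next
    case False
    obtain j where j: "le x j" "covers le j y" using lower_cover_ex[OF P less.prems False] by blast
    have jy: "le j y" "j \<noteq> y" using j(2) unfolding covers_def by auto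
    have "{l. le x l \<and> le l j} \<subset> {l. le x l \<and> le l y}"
    proof
      show "{l. le x l \<and> le l j} \<subseteq> {l. le x l \<and> le l y}" using jy poset_trans[OF P] by blast
      have "y \<notin> {l. le x l \<and> le l j}" using jy poset_antisym[OF P] by blast
      moreover have "y \<in> {l. le x l \<and> le l y}" using less.prems poset_refl[OF P] by blast
      ultimately show "{l. le x l \<and> le l j} \<noteq> {l. le x l \<and> le l y}" by blast
    qed
    then have "card {l. le x l \<and> le l j} < card {l. le x l \<and> le l y}"
      by (intro psubset_card_mono) auto
    from less.hyps[OF this j(1)] obtain p where p: "p \<noteq> []" "hd p = x" "last p = j" "distinct p"
      "successively (covers le) p" "\<forall>z\<in>set p. le x z \<and> le z j" by blast
    have "y \<notin> set p" using p(6) jy poset_antisym[OF P] by blast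
    show ?thesis
      apply (intro exI[of _ "p @ [y]"])
      using p \<open>y \<notin> set p\<close> j(2) jy less.prems poset_trans[OF P] poset_refl[OF P]
      by (auto simp: successively_append_iff)
  qed
qed

lemma acyclic_succ:
  assumes A: "hasse_acyclic le" and "length vs \<ge> 3" "distinct vs"
    "successively (hasse_edge le) vs" "hasse_edge le (last vs) (hd vs)"
  shows False
proof -
  have "\<forall>k < length vs - 1. hasse_edge le (vs ! k) (vs ! Suc k)"
    using assms(4) unfolding successively_conv_nth by auto
  then show False using A assms unfolding hasse_acyclic_def by blast
qed

lemma lower_cover_unique:
  fixes le :: "'a::finite \<Rightarrow> 'a \<Rightarrow> bool"
  assumes P: "is_poset le" and A: "hasse_acyclic le"
    and h: "le i j1" "le i j2" "covers le j1 k" "covers le j2 k"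
  shows "j1 = j2"
proof (rule ccontr)
  assume ne: "j1 \<noteq> j2"
  let ?S = "{m. le m j1 \<and> le m j2}"
  let ?u = "\<lambda>m. card {l. le m l}"
  have "i \<in> ?S" using h by blast
  then obtain m where m: "m \<in> ?S" "\<And>m'. m' \<in> ?S \<Longrightarrow> ?u m \<le> ?u m'"
    using ex_has_least_nat[of "\<lambda>j. j \<in> ?S" i ?u] by blast
  have mmax: "m' = m" if "m' \<in> ?S" "le m m'" for m'
  proof (rule ccontr)
    assume "m' \<noteq> m"
    have "{l. le m' l} \<subset> {l. le m l}"
    proof
      show "{l. le m' l} \<subseteq> {l. le m l}" using that poset_trans[OF P] by blast
      have "m \<notin> {l. le m' l}" using that \<open>m' \<noteq> m\<close> poset_antisym[OF P] by blast
      moreover have "m \<in> {l. le m l}" using poset_refl[OF P] by blast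
      ultimately show "{l. le m' l} \<noteq> {l. le m l}" by blast
    qed
    then have "?u m' < ?u m" by (intro psubset_card_mono) auto
    with m(2)[OF that(1)] show False by linarith
  qed
  have c1: "le j1 k" "j1 \<noteq> k" "\<And>l. le j1 l \<Longrightarrow> le l k \<Longrightarrow> l = j1 \<or> l = k"
    using h(3) unfolding covers_def by auto
  have c2: "le j2 k" "j2 \<noteq> k" "\<And>l. le j2 l \<Longrightarrow> le l k \<Longrightarrow> l = j2 \<or> l = k"
    using h(4) unfolding covers_def by auto
  have mj1: "m \<noteq> j1"
  proof
    assume "m = j1"
    then have "le j1 j2" using m(1) by simp
    then show False using c1(3)[of j2] c2(1,2) ne by auto
  qed
  have mj2: "m \<noteq> j2"
  proof
    assume "m = j2"
    then have "le j2 j1" using m(1) by simp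
    then show False using c2(3)[of j1] c1(1,2) ne by auto
  qed
  obtain p1 where p1: "p1 \<noteq> []" "hd p1 = m" "last p1 = j1" "distinct p1"
     "successively (covers le) p1" "\<forall>z\<in>set p1. le m z \<and> le z j1"
    using sat_chain[OF P] m(1) by blast
  obtain p2 where p2: "p2 \<noteq> []" "hd p2 = m" "last p2 = j2" "distinct p2"
     "successively (covers le) p2" "\<forall>z\<in>set p2. le m z \<and> le z j2"
    using sat_chain[OF P] m(1) by blast
  obtain q where q: "p2 = m # q" using p2(1,2) by (cases p2) auto
  have qne: "q \<noteq> []" using q p2(3) mj2 by auto
  then obtain q0 q' where q0: "q = q0 # q'" by (cases q) auto
  have cq0: "covers le m q0" using p2(5) q q0 by simp
  have lastq: "last q = j2" using q qne p2(3) by simp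
  define vs where "vs = p1 @ [k] @ rev q"
  have kp1: "k \<notin> set p1"
  proof
    assume "k \<in> set p1"
    then have "le k j1" using p1(6) by blast
    then show False using c1(1,2) poset_antisym[OF P, of k j1] by simp
  qed
  have kq: "k \<notin> set q"
  proof
    assume "k \<in> set q"
    then have "le k j2" using p2(6) q by simp
    then show False using c2(1,2) poset_antisym[OF P, of k j2] by simp
  qed
  have mq: "m \<notin> set q" using p2(4) q by simp
  have disj: "set p1 \<inter> set q = {}"
  proof (rule ccontr)
    assume "set p1 \<inter> set q \<noteq> {}"
    then obtain z where z: "z \<in> set p1" "z \<in> set q" by blast
    have "z \<in> ?S" "le m z" using z p1(6) p2(6) q by auto
    then have "z = m" using mmax by blast
    then show False using z(2) mq by simp
  qed
  have "length vs \<ge> 3" using p1(1) qne unfolding vs_def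
    by (cases p1; cases q) auto
  moreover have "distinct vs" unfolding vs_def using p1(4) p2(4) q kp1 kq disj by auto
  moreover have "successively (hasse_edge le) vs"
  proof -
    have "successively (hasse_edge le) p1"
      by (rule successively_mono[OF p1(5)]) (simp add: hasse_edge_def)
    moreover have "successively (\<lambda>x y. hasse_edge le y x) q"
    proof -
      have "successively (covers le) q" using p2(5) qne unfolding q successively_Cons by simp
      then show ?thesis by (rule successively_mono) (simp add: hasse_edge_def)
    qed
    ultimately have s1: "successively (hasse_edge le) p1" and s3: "successively (hasse_edge le) (rev q)"
      by simp_all
    have "hasse_edge le k (hd (rev q))" using qne lastq h(4) by (simp add: hd_rev hasse_edge_def)
    then have "successively (hasse_edge le) (k # rev q)" using s3 qne by (simp add: successively_Cons)
    moreover have "hasse_edge le (last p1) k" using p1(3) h(3) by (simp add: hasse_edge_def)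
    ultimately show ?thesis using s1 p1(1) unfolding vs_def by (simp add: successively_append_iff)
  qed
  moreover have "hasse_edge le (last vs) (hd vs)"
    unfolding vs_def using p1 qne q0 cq0 by (auto simp: last_rev hasse_edge_def)
  ultimately show False using acyclic_succ[OF A] by blast
qed

lemma dual_poset: "is_poset le \<Longrightarrow> is_poset (\<lambda>x y. le y x)"
  unfolding is_poset_def apply (intro conjI allI impI) apply blast apply blast apply blast done

lemma dual_covers: "covers (\<lambda>x y. le y x) i j = covers le j i"
  unfolding covers_def by blast
lemma dual_acyclic: "hasse_acyclic le \<Longrightarrow> hasse_acyclic (\<lambda>x y. le y x)"
proof -
  have "hasse_edge (\<lambda>x y. le y x) i j = hasse_edge le i j" for i j
    using dual_covers[of le] unfolding hasse_edge_def by blast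
  then have e: "hasse_edge (\<lambda>x y. le y x) = hasse_edge le" by (intro ext)
  show "hasse_acyclic le \<Longrightarrow> hasse_acyclic (\<lambda>x y. le y x)"
    unfolding hasse_acyclic_def e .
qed

lemma cover_count:
  fixes le :: "'a::finite \<Rightarrow> 'a \<Rightarrow> bool"
  assumes P: "is_poset le" and A: "hasse_acyclic le"
  shows "(\<Sum>d\<in>UNIV. if covers le d a \<and> le b d then 1 else 0 :: real)
     = (if le b a \<and> b \<noteq> a then 1 else 0)"
proof (cases "le b a \<and> b \<noteq> a")
  case True
  then obtain j where j: "le b j" "covers le j a" using lower_cover_ex[OF P] by blast
  have eq: "(covers le d a \<and> le b d) = (d = j)" for d
  proof
    assume "covers le d a \<and> le b d"
    then show "d = j" using lower_cover_unique[OF P A, of b d j a] j by blast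
  next
    assume "d = j" then show "covers le d a \<and> le b d" using j by simp
  qed
  show ?thesis using True by (simp only: eq) simp
next
  case False
  have "\<not> (covers le d a \<and> le b d)" for d
  proof
    assume d: "covers le d a \<and> le b d"
    then have da: "le d a" "d \<noteq> a" unfolding covers_def by auto
    then have "le b a" using d poset_trans[OF P, of b d a] by blast
    then have "b = a" using False by simp
    then show False using d da poset_antisym[OF P, of d a] by simp
  qed
  then have "(\<Sum>d\<in>UNIV. if covers le d a \<and> le b d then 1 else 0 :: real) = 0"
    by (intro sum.neutral) auto
  then show ?thesis using False by simp
qed



definition Lmap :: "('a::finite \<Rightarrow> 'a \<Rightarrow> bool) \<Rightarrow> ('a \<Rightarrow> real) \<Rightarrow> ('a \<Rightarrow> real)" where
  "Lmap le y = (\<lambda>a. \<Sum>b\<in>UNIV. if le b a then y b else 0)"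

definition Rmap :: "('a::finite \<Rightarrow> 'a \<Rightarrow> bool) \<Rightarrow> ('a \<Rightarrow> real) \<Rightarrow> ('a \<Rightarrow> real)" where
  "Rmap le x = (\<lambda>a. x a - (\<Sum>d\<in>UNIV. if covers le d a then x d else 0))"

lemma R_L:
  fixes le :: "'a::finite \<Rightarrow> 'a \<Rightarrow> bool"
  assumes P: "is_poset le" and A: "hasse_acyclic le"
  shows "Rmap le (Lmap le y) = y"
proof
  fix a
  have "(\<Sum>d\<in>UNIV. if covers le d a then (\<Sum>b\<in>UNIV. if le b d then y b else 0) else 0)
      = (\<Sum>d\<in>UNIV. \<Sum>b\<in>UNIV. if covers le d a \<and> le b d then y b else 0)"
    by (rule sum.cong[OF refl]) simp
  also have "\<dots> = (\<Sum>b\<in>UNIV. \<Sum>d\<in>UNIV. if covers le d a \<and> le b d then y b else 0)"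
    by (rule sum.swap)
  also have "\<dots> = (\<Sum>b\<in>UNIV. y b * (\<Sum>d\<in>UNIV. if covers le d a \<and> le b d then 1 else 0))"
    unfolding sum_distrib_left by (rule sum.cong[OF refl])+ simp
  also have "\<dots> = (\<Sum>b\<in>UNIV. if le b a \<and> b \<noteq> a then y b else 0)"
    by (rule sum.cong[OF refl]) (simp add: cover_count[OF P A])
  finally have e: "(\<Sum>d\<in>UNIV. if covers le d a then Lmap le y d else 0)
       = (\<Sum>b\<in>UNIV. if le b a \<and> b \<noteq> a then y b else 0)"
    unfolding Lmap_def by simp
  have "Lmap le y a - (\<Sum>b\<in>UNIV. if le b a \<and> b \<noteq> a then y b else 0)
      = (\<Sum>b\<in>UNIV. (if le b a then y b else 0) - (if le b a \<and> b \<noteq> a then y b else 0))"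
    unfolding Lmap_def by (simp add: sum_subtractf)
  also have "\<dots> = (\<Sum>b\<in>UNIV. if b = a then y b else 0)"
    by (rule sum.cong[OF refl]) (auto simp: poset_refl[OF P])
  also have "\<dots> = y a" by simp
  finally show "Rmap le (Lmap le y) a = y a" unfolding Rmap_def using e by simp
qed

lemma L_R:
  fixes le :: "'a::finite \<Rightarrow> 'a \<Rightarrow> bool"
  assumes P: "is_poset le" and A: "hasse_acyclic le"
  shows "Lmap le (Rmap le x) = x"
proof
  fix a
  have cc: "(\<Sum>b\<in>UNIV. if covers le d b \<and> le b a then 1 else 0 :: real)
     = (if le d a \<and> a \<noteq> d then 1 else 0)" for d
    using cover_count[OF dual_poset[OF P] dual_acyclic[OF A], of d a] unfolding dual_covers[of le] .
  have "(\<Sum>b\<in>UNIV. if le b a then (\<Sum>d\<in>UNIV. if covers le d b then x d else 0) else 0)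
      = (\<Sum>b\<in>UNIV. \<Sum>d\<in>UNIV. if covers le d b \<and> le b a then x d else 0)"
    by (rule sum.cong[OF refl]) simp
  also have "\<dots> = (\<Sum>d\<in>UNIV. \<Sum>b\<in>UNIV. if covers le d b \<and> le b a then x d else 0)"
    by (rule sum.swap)
  also have "\<dots> = (\<Sum>d\<in>UNIV. x d * (\<Sum>b\<in>UNIV. if covers le d b \<and> le b a then 1 else 0))"
    unfolding sum_distrib_left by (rule sum.cong[OF refl])+ simp
  also have "\<dots> = (\<Sum>d\<in>UNIV. if le d a \<and> a \<noteq> d then x d else 0)"
    by (rule sum.cong[OF refl]) (simp add: cc)
  finally have e: "(\<Sum>b\<in>UNIV. if le b a then (\<Sum>d\<in>UNIV. if covers le d b then x d else 0) else 0)
      = (\<Sum>d\<in>UNIV. if le d a \<and> a \<noteq> d then x d else 0)" .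
  have "Lmap le (Rmap le x) a = (\<Sum>b\<in>UNIV. (if le b a then x b else 0)
      - (if le b a then (\<Sum>d\<in>UNIV. if covers le d b then x d else 0) else 0))"
    unfolding Lmap_def Rmap_def by (rule sum.cong[OF refl]) simp
  also have "\<dots> = (\<Sum>b\<in>UNIV. (if le b a then x b else 0) - (if le b a \<and> a \<noteq> b then x b else 0))"
    unfolding sum_subtractf e by simp
  also have "\<dots> = (\<Sum>b\<in>UNIV. if b = a then x b else 0)"
    by (rule sum.cong[OF refl]) (auto simp: poset_refl[OF P])
  also have "\<dots> = x a" by simp
  finally show "Lmap le (Rmap le x) a = x a" .
qed

lemma tits_Rmap:
  "tits_form le x = (\<Sum>a\<in>UNIV. x a * Rmap le x a)"
proof -
  have "(\<Sum>i\<in>UNIV. \<Sum>j\<in>UNIV. if covers le i j then x i * x j else 0)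
      = (\<Sum>j\<in>UNIV. \<Sum>i\<in>UNIV. if covers le i j then x i * x j else 0)"
    by (rule sum.swap)
  also have "\<dots> = (\<Sum>a\<in>UNIV. x a * (\<Sum>d\<in>UNIV. if covers le d a then x d else 0))"
    unfolding sum_distrib_left by (rule sum.cong[OF refl])+ (simp add: mult.commute)
  finally show ?thesis
    unfolding tits_form_def Rmap_def by (simp add: right_diff_distrib sum_subtractf power2_eq_square)
qed

lemma tits_L:
  fixes le :: "'a::finite \<Rightarrow> 'a \<Rightarrow> bool"
  assumes P: "is_poset le" and A: "hasse_acyclic le"
  shows "tits_form le (Lmap le y) = f_S le y"
proof -
  have "tits_form le (Lmap le y) = (\<Sum>a\<in>UNIV. Lmap le y a * y a)"
    unfolding tits_Rmap R_L[OF P A] ..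
  also have "\<dots> = (\<Sum>a\<in>UNIV. \<Sum>b\<in>UNIV. if le b a then y b * y a else 0)"
    unfolding Lmap_def sum_distrib_right by (rule sum.cong[OF refl])+ simp
  also have "\<dots> = f_S le y" unfolding f_S_def by (rule sum.swap)
  finally show ?thesis .
qed

lemma pos_def_equiv:
  fixes le :: "'a::finite \<Rightarrow> 'a \<Rightarrow> bool"
  assumes P: "is_poset le" and A: "hasse_acyclic le"
  shows "pos_def (f_S le) \<longleftrightarrow> pos_def (tits_form le)"
proof
  assume f: "pos_def (f_S le)"
  show "pos_def (tits_form le)" unfolding pos_def_def
  proof (intro allI impI)
    fix x :: "'a \<Rightarrow> real" assume x: "x \<noteq> (\<lambda>_. 0)"
    have "Rmap le x \<noteq> (\<lambda>_. 0)"
    proof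
      assume "Rmap le x = (\<lambda>_. 0)"
      then have "x = Lmap le (\<lambda>_. 0)" using L_R[OF P A, of x] by simp
      then show False using x by (simp add: Lmap_def)
    qed
    then have "f_S le (Rmap le x) > 0" using f unfolding pos_def_def by blast
    then show "tits_form le x > 0" using tits_L[OF P A, of "Rmap le x"] L_R[OF P A, of x] by simp
  qed
next
  assume t: "pos_def (tits_form le)"
  show "pos_def (f_S le)" unfolding pos_def_def
  proof (intro allI impI)
    fix y :: "'a \<Rightarrow> real" assume y: "y \<noteq> (\<lambda>_. 0)"
    have "Lmap le y \<noteq> (\<lambda>_. 0)"
    proof
      assume "Lmap le y = (\<lambda>_. 0)"
      then have "y = Rmap le (\<lambda>_. 0)" using R_L[OF P A, of y] by simp
      then show False using y by (simp add: Rmap_def)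
    qed
    then have "tits_form le (Lmap le y) > 0" using t unfolding pos_def_def by blast
    then show "f_S le y > 0" using tits_L[OF P A, of y] by simp
  qed
qed



definition gc :: "('a \<Rightarrow> 'a \<Rightarrow> bool) \<Rightarrow> 'a \<Rightarrow> 'a \<Rightarrow> real" where
  "gc le i j = (if le i j then 1 else 0) + (if le j i then 1 else 0)"

definition Gm :: "('a::finite \<Rightarrow> 'a \<Rightarrow> bool) \<Rightarrow> ('a \<Rightarrow> real) \<Rightarrow> ('a \<Rightarrow> real)" where
  "Gm le x = (\<lambda>i. \<Sum>j\<in>UNIV. gc le i j * x j)"

definition Qf :: "('a::finite \<Rightarrow> 'a \<Rightarrow> bool) \<Rightarrow> ('a \<Rightarrow> real) \<Rightarrow> ('a \<Rightarrow> real) \<Rightarrow> real" where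
  "Qf le x y = (\<Sum>i\<in>UNIV. \<Sum>j\<in>UNIV. if le i j then x i * y j else 0)"

definition Bf :: "('a::finite \<Rightarrow> 'a \<Rightarrow> bool) \<Rightarrow> ('a \<Rightarrow> real) \<Rightarrow> ('a \<Rightarrow> real) \<Rightarrow> real" where
  "Bf le x y = (\<Sum>i\<in>UNIV. x i * Gm le y i)"

lemma f_Qf: "f_S le x = Qf le x x"
  unfolding f_S_def Qf_def ..

lemma Bf_Qf: "Bf le x y = Qf le x y + Qf le y x"
proof -
  have "Bf le x y = (\<Sum>i\<in>UNIV. \<Sum>j\<in>UNIV. (if le i j then x i * y j else 0) + (if le j i then x i * y j else 0))"
    unfolding Bf_def Gm_def gc_def sum_distrib_left by (rule sum.cong[OF refl])+ (simp add: algebra_simps)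
  also have "\<dots> = Qf le x y + (\<Sum>i\<in>UNIV. \<Sum>j\<in>UNIV. if le j i then x i * y j else 0)"
    unfolding Qf_def sum.distrib ..
  also have "(\<Sum>i\<in>UNIV. \<Sum>j\<in>UNIV. if le j i then x i * y j else 0) = Qf le y x"
    unfolding Qf_def apply (subst sum.swap) apply (rule sum.cong[OF refl])+ apply (simp add: mult.commute) done
  finally show ?thesis .
qed

lemma Bf_sym: "Bf le x y = Bf le y x"
  unfolding Bf_Qf by simp

lemma f_Bf: "f_S le x = Bf le x x / 2"
  unfolding Bf_Qf f_Qf by simp

lemma Qf_expand: "Qf le (\<lambda>i. u i + t * d i) (\<lambda>i. u i + t * d i)
   = Qf le u u + t * (Qf le u d + Qf le d u) + t^2 * Qf le d d"
proof -
  have "Qf le (\<lambda>i. u i + t * d i) (\<lambda>i. u i + t * d i) =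
     (\<Sum>i\<in>UNIV. \<Sum>j\<in>UNIV. (if le i j then u i * u j else 0) + t * (if le i j then u i * d j else 0)
        + t * (if le i j then d i * u j else 0) + t^2 * (if le i j then d i * d j else 0))"
    unfolding Qf_def by (rule sum.cong[OF refl])+ (simp add: algebra_simps power2_eq_square)
  then show ?thesis unfolding Qf_def
    by (simp add: sum.distrib sum_distrib_left algebra_simps)
qed

lemma f_expand: "f_S le (\<lambda>i. u i + t * d i) = f_S le u + t * Bf le d u + t^2 * f_S le d"
  unfolding f_Qf Qf_expand Bf_Qf by simp

lemma Gm_add: "Gm le (\<lambda>i. x i + y i) = (\<lambda>i. Gm le x i + Gm le y i)"
  unfolding Gm_def by (simp add: algebra_simps sum.distrib)

lemma Gm_scale: "Gm le (\<lambda>i. c * x i) = (\<lambda>i. c * Gm le x i)"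
  unfolding Gm_def by (simp add: algebra_simps sum_distrib_left)

lemma Gm_zero: "Gm le (\<lambda>i. 0) = (\<lambda>i. 0)"
  unfolding Gm_def by simp

lemma Gm_minus: "Gm le (\<lambda>i. - x i) = (\<lambda>i. - Gm le x i)"
  unfolding Gm_def by (simp add: sum_negf)

lemma Gm_diff: "Gm le (\<lambda>i. x i - y i) = (\<lambda>i. Gm le x i - Gm le y i)"
  unfolding Gm_def by (simp add: algebra_simps sum_subtractf)

lemma pderiv_f: "pderiv_at (f_S le) i x = Gm le x i"
proof -
  have de: "((\<lambda>t. (x(i:=t)) a) has_real_derivative (if a = i then 1 else 0)) (at t)" for a t
    by (cases "a = i") (simp_all add: DERIV_ident DERIV_const)
  let ?D = "\<lambda>a b. if le a b then (if a = i then 1 else 0) * x b + (if b = i then 1 else 0) * x a else 0"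
  have "((\<lambda>t. (x(i:=t)) a * (x(i:=t)) b) has_real_derivative
      (if a = i then 1 else 0) * (x(i:= x i)) b + (if b = i then 1 else 0) * (x(i:= x i)) a) (at (x i))" for a b
    by (rule DERIV_mult[OF de de])
  then have dt: "((\<lambda>t. if le a b then (x(i:=t)) a * (x(i:=t)) b else 0) has_real_derivative ?D a b) (at (x i))" for a b
    by (cases "le a b") (simp_all add: DERIV_const)
  have "((\<lambda>t. f_S le (x(i:=t))) has_real_derivative (\<Sum>a\<in>UNIV. \<Sum>b\<in>UNIV. ?D a b)) (at (x i))"
    unfolding f_S_def by (intro DERIV_sum dt)
  then have "pderiv_at (f_S le) i x = (\<Sum>a\<in>UNIV. \<Sum>b\<in>UNIV. ?D a b)"
    unfolding pderiv_at_def by (rule DERIV_imp_deriv)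
  also have "\<dots> = (\<Sum>a\<in>UNIV. \<Sum>b\<in>UNIV. (if a = i then (if le a b then x b else 0) else 0)
        + (if b = i then (if le a b then x a else 0) else 0))"
    by (rule sum.cong[OF refl])+ simp
  also have "\<dots> = (\<Sum>b\<in>UNIV. if le i b then x b else 0) + (\<Sum>a\<in>UNIV. if le a i then x a else 0)"
  proof -
    have "(\<Sum>a\<in>UNIV. \<Sum>b\<in>UNIV. if a = i then (if le a b then x b else 0) else 0)
       = (\<Sum>a\<in>UNIV. if a = i then (\<Sum>b\<in>UNIV. if le a b then x b else 0) else 0)"
      by (rule sum.cong[OF refl]) simp
    then have h1: "(\<Sum>a\<in>UNIV. \<Sum>b\<in>UNIV. if a = i then (if le a b then x b else 0) else 0)
       = (\<Sum>b\<in>UNIV. if le i b then x b else 0)" by simp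
    show ?thesis by (simp only: sum.distrib h1) simp
  qed
  also have "\<dots> = Gm le x i"
  proof -
    have "Gm le x i = (\<Sum>j\<in>UNIV. (if le i j then x j else 0) + (if le j i then x j else 0))"
      unfolding Gm_def gc_def by (rule sum.cong[OF refl]) (simp add: algebra_simps)
    then show ?thesis by (simp add: sum.distrib)
  qed
  finally show ?thesis .
qed



lemma Gm_inj0:
  assumes pd: "pos_def (f_S le)" and g: "Gm le x = (\<lambda>_. 0)"
  shows "x = (\<lambda>_. 0)"
proof (rule ccontr)
  assume "x \<noteq> (\<lambda>_. 0)"
  then have "f_S le x > 0" using pd unfolding pos_def_def by blast
  moreover have "f_S le x = 0" unfolding f_Bf Bf_def g by simp
  ultimately show False by simp
qed

lemma Gm_surj:
  fixes le :: "'a::finite \<Rightarrow> 'a \<Rightarrow> bool"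
  assumes pd: "pos_def (f_S le)"
  shows "\<exists>x. Gm le x = b"
proof -
  define \<phi> :: "real^'a \<Rightarrow> real^'a" where "\<phi> v = vec_lambda (Gm le (vec_nth v))" for v
  have add: "vec_nth (v + w) = (\<lambda>i. vec_nth v i + vec_nth w i)" for v w :: "real^'a"
    by (rule ext) simp
  have sc: "vec_nth (c *\<^sub>R v) = (\<lambda>i. c * vec_nth v i)" for c and v :: "real^'a"
    by (rule ext) simp
  have lin: "linear \<phi>"
  proof (rule linearI)
    fix v w :: "real^'a"
    show "\<phi> (v + w) = \<phi> v + \<phi> w" unfolding \<phi>_def add Gm_add by (simp add: vec_eq_iff)
  next
    fix c :: real and v :: "real^'a"
    show "\<phi> (c *\<^sub>R v) = c *\<^sub>R \<phi> v" unfolding \<phi>_def sc Gm_scale by (simp add: vec_eq_iff)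
  qed
  have inj: "inj \<phi>"
  proof (rule injI)
    fix v w :: "real^'a"
    assume "\<phi> v = \<phi> w"
    then have "Gm le (vec_nth v) = Gm le (vec_nth w)" unfolding \<phi>_def
      by (metis vec_lambda_inverse UNIV_I)
    then have "Gm le (\<lambda>i. vec_nth v i - vec_nth w i) = (\<lambda>_. 0)" unfolding Gm_diff by simp
    then have "(\<lambda>i. vec_nth v i - vec_nth w i) = (\<lambda>_. 0)" by (rule Gm_inj0[OF pd])
    then show "v = w" by (simp add: vec_eq_iff fun_eq_iff)
  qed
  have "surj \<phi>" using linear_injective_imp_surjective[OF lin inj] by simp
  then obtain v where "\<phi> v = vec_lambda b" by (metis surjD)
  then have "Gm le (vec_nth v) = b" unfolding \<phi>_def by (metis vec_lambda_inverse UNIV_I)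
  then show ?thesis by blast
qed



lemma f_zero: "f_S le (\<lambda>_. 0) = 0"
  unfolding f_Bf Bf_def by simp

lemma f_nonneg:
  assumes pd: "pos_def (f_S le)" shows "f_S le d \<ge> 0"
proof (cases "d = (\<lambda>_. 0)")
  case True then show ?thesis by (simp add: f_zero)
next
  case False then show ?thesis using pd unfolding pos_def_def by (simp add: less_imp_le)
qed

lemma c_to_b:
  fixes le :: "'a::finite \<Rightarrow> 'a \<Rightarrow> bool"
  assumes pd: "pos_def (f_S le)" and aSt: "a \<in> St (f_S le)"
  shows "St_tilde (f_S le) \<noteq> {}"
proof -
  have apos: "\<And>i. a i > 0" and ag: "\<And>i j. Gm le a i = Gm le a j"
    using aSt unfolding St_def pderiv_f by auto
  define s where "s = (\<Sum>i\<in>UNIV. a i)"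
  have s: "s > 0" unfolding s_def using apos by (simp add: sum_pos)
  define u where "u = (\<lambda>i. (1/s) * a i)"
  have upos: "\<And>i. u i > 0" using apos s by (simp add: u_def)
  have usum: "(\<Sum>i\<in>UNIV. u i) = 1"
    unfolding u_def sum_distrib_left[symmetric] s_def[symmetric] using s by simp
  define \<mu> where "\<mu> = Gm le u undefined"
  have gu: "\<And>i. Gm le u i = \<mu>" unfolding \<mu>_def u_def Gm_scale using ag by simp
  have uP: "u \<in> P_n" unfolding P_n_def using upos usum by simp
  have unz: "u \<noteq> (\<lambda>_. 0)" using upos by (metis less_irrefl)
  have fu: "f_S le u > 0" using pd unz unfolding pos_def_def by blast
  have key: "f_S le w = f_S le u + f_S le (\<lambda>i. w i - u i)" if ws: "(\<Sum>i\<in>UNIV. w i) = 1" for w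
  proof -
    have e: "f_S le (\<lambda>i. u i + 1 * (w i - u i)) = f_S le u + 1 * Bf le (\<lambda>i. w i - u i) u
        + 1^2 * f_S le (\<lambda>i. w i - u i)" by (rule f_expand)
    have "Bf le (\<lambda>i. w i - u i) u = (\<Sum>i\<in>UNIV. (w i - u i) * \<mu>)" unfolding Bf_def gu ..
    also have "\<dots> = ((\<Sum>i\<in>UNIV. w i) - (\<Sum>i\<in>UNIV. u i)) * \<mu>"
      by (simp add: sum_distrib_right[symmetric] sum_subtractf)
    also have "\<dots> = 0" using ws usum by simp
    finally show ?thesis using e by simp
  qed
  have A: "\<forall>w\<in>P_n_closed. f_S le u \<le> f_S le w"
    using key f_nonneg[OF pd] by (auto simp: P_n_closed_def)
  have B: "\<forall>w\<in>P_n_closed - P_n. f_S le u < f_S le w"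
  proof
    fix w :: "'a \<Rightarrow> real" assume w: "w \<in> P_n_closed - P_n"
    then have ws: "(\<Sum>i\<in>UNIV. w i) = 1" by (simp add: P_n_closed_def)
    from w obtain i where "\<not> w i > 0" by (auto simp: P_n_closed_def P_n_def)
    then have "w i - u i \<noteq> 0" using upos[of i] by linarith
    then have "(\<lambda>i. w i - u i) \<noteq> (\<lambda>_. 0)" by (metis)
    then have "f_S le (\<lambda>i. w i - u i) > 0" using pd unfolding pos_def_def by blast
    then show "f_S le u < f_S le w" using key[OF ws] by simp
  qed
  have "u \<in> St_tilde (f_S le)" unfolding St_tilde_def using uP fu A B by blast
  then show ?thesis by blast
qed

lemma b_to_a:
  fixes le :: "'a::finite \<Rightarrow> 'a \<Rightarrow> bool"
  assumes pd: "pos_def (f_S le)" and uSt: "u \<in> St_tilde (f_S le)"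
  shows "C_set (f_S le) = {}"
proof (rule ccontr)
  assume "C_set (f_S le) \<noteq> {}"
  then obtain h0 where h0: "h0 \<in> C_set (f_S le)" by blast
  have "\<exists>h. (\<Sum>i\<in>UNIV. h i) = 0 \<and> h \<noteq> (\<lambda>_. 0) \<and> (\<forall>i. Gm le h i \<ge> 0)"
  proof -
    have s0: "(\<Sum>i\<in>UNIV. h0 i) = 0" and nz: "h0 \<noteq> (\<lambda>_. 0)"
      and sg: "(\<forall>i. Gm le h0 i \<le> 0) \<or> (\<forall>i. Gm le h0 i \<ge> 0)"
      using h0 unfolding C_set_def H_n_def pderiv_f by auto
    show ?thesis
    proof (cases "\<forall>i. Gm le h0 i \<ge> 0")
      case True then show ?thesis using s0 nz by blast
    next
      case False
      then have neg: "\<forall>i. Gm le h0 i \<le> 0" using sg by blast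
      have "(\<Sum>i\<in>UNIV. - h0 i) = 0" using s0 by (simp add: sum_negf)
      moreover have "(\<lambda>i. - h0 i) \<noteq> (\<lambda>_. 0)"
      proof
        assume "(\<lambda>i. - h0 i) = (\<lambda>_. 0)"
        then have "h0 = (\<lambda>_. 0)" by (metis add.inverse_neutral minus_minus)
        then show False using nz by simp
      qed
      moreover have "\<forall>i. Gm le (\<lambda>i. - h0 i) i \<ge> 0" unfolding Gm_minus using neg by simp
      ultimately show ?thesis by blast
    qed
  qed
  then obtain h where hs: "(\<Sum>i\<in>UNIV. h i) = 0" and hnz: "h \<noteq> (\<lambda>_. 0)"
    and hg: "\<And>i. Gm le h i \<ge> 0" by blast
  have upos: "\<And>i. u i > 0" and usum: "(\<Sum>i\<in>UNIV. u i) = 1"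
    and umin: "\<forall>w\<in>P_n_closed. f_S le u \<le> f_S le w"
    using uSt unfolding St_tilde_def P_n_def by auto
  have "Gm le h \<noteq> (\<lambda>_. 0)" using Gm_inj0[OF pd] hnz by blast
  then obtain i0 where "Gm le h i0 \<noteq> 0" by (metis ext)
  then have gi0: "Gm le h i0 > 0" using hg[of i0] by linarith
  define \<beta> where "\<beta> = (\<Sum>i\<in>UNIV. u i * Gm le h i)"
  have \<beta>: "\<beta> > 0" unfolding \<beta>_def
    by (rule sum_pos2[where i=i0]) (use upos hg gi0 in \<open>auto intro: mult_nonneg_nonneg less_imp_le\<close>)
  define d where "d = (\<lambda>i. - h i)"
  have dnz: "d \<noteq> (\<lambda>_. 0)"
  proof
    assume "d = (\<lambda>_. 0)"
    then have "h = (\<lambda>_. 0)" unfolding d_def by (metis add.inverse_neutral minus_minus)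
    then show False using hnz by simp
  qed
  define \<gamma> where "\<gamma> = f_S le d"
  have \<gamma>: "\<gamma> > 0" unfolding \<gamma>_def using pd dnz unfolding pos_def_def by blast
  have "Bf le d u = Bf le u d" by (rule Bf_sym)
  also have "\<dots> = - \<beta>" unfolding Bf_def d_def Gm_minus \<beta>_def by (simp add: sum_negf)
  finally have Bd: "Bf le d u = - \<beta>" .
  define m where "m = Min (range u)"
  have m: "m > 0" unfolding m_def using upos by (subst Min_gr_iff) auto
  have mu: "\<And>i. m \<le> u i" unfolding m_def by (rule Min_le) auto
  define K where "K = 1 + (\<Sum>i\<in>UNIV. \<bar>h i\<bar>)"
  have hK: "\<And>i. \<bar>h i\<bar> \<le> K"
  proof -
    fix i
    have "\<bar>h i\<bar> \<le> (\<Sum>i\<in>UNIV. \<bar>h i\<bar>)" by (rule member_le_sum) auto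
    then show "\<bar>h i\<bar> \<le> K" unfolding K_def by linarith
  qed
  have "(\<Sum>i\<in>UNIV. \<bar>h i\<bar>) \<ge> 0" by (rule sum_nonneg) simp
  then have K: "K > 0" unfolding K_def by linarith
  define t where "t = min (m / K) (\<beta> / (2 * \<gamma>))"
  have t: "t > 0" unfolding t_def using m K \<beta> \<gamma> by simp
  have tmK: "t \<le> m / K" and tb: "t \<le> \<beta> / (2 * \<gamma>)" unfolding t_def by auto
  define w where "w = (\<lambda>i. u i + t * d i)"
  have wnn: "w i \<ge> 0" for i
  proof -
    have "t * \<bar>h i\<bar> \<le> (m / K) * K" using tmK hK[of i] t by (intro mult_mono) auto
    also have "\<dots> = m" using K by simp
    finally have "t * \<bar>h i\<bar> \<le> m" .
    moreover have "t * h i \<le> t * \<bar>h i\<bar>" using t by (intro mult_left_mono) auto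
    ultimately show ?thesis unfolding w_def d_def using mu[of i] by simp
  qed
  have wsum: "(\<Sum>i\<in>UNIV. w i) = 1"
  proof -
    have "(\<Sum>i\<in>UNIV. w i) = (\<Sum>i\<in>UNIV. u i) - t * (\<Sum>i\<in>UNIV. h i)"
      unfolding w_def d_def by (simp add: sum_subtractf sum_distrib_left)
    then show ?thesis using usum hs by simp
  qed
  have "w \<in> P_n_closed" unfolding P_n_closed_def using wnn wsum by simp
  then have ge: "f_S le u \<le> f_S le w" using umin by blast
  have fw: "f_S le w = f_S le u - t * \<beta> + t^2 * \<gamma>"
    unfolding w_def f_expand Bd \<gamma>_def by simp
  have "t * \<gamma> \<le> \<beta> / 2" using tb \<gamma> by (simp add: field_simps)
  then have "t * (t * \<gamma>) \<le> t * (\<beta> / 2)" using t by (intro mult_left_mono) auto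
  then have "t^2 * \<gamma> < t * \<beta>" using t \<beta> by (simp add: power2_eq_square algebra_simps)
  then have "f_S le w < f_S le u" using fw by simp
  then show False using ge by simp
qed

lemma a_to_c:
  fixes le :: "'a::finite \<Rightarrow> 'a \<Rightarrow> bool"
  assumes pd: "pos_def (f_S le)" and C: "C_set (f_S le) = {}"
  shows "St (f_S le) \<noteq> {}"
proof -
  obtain w where gw: "Gm le w = (\<lambda>_. 1)" using Gm_surj[OF pd] by blast
  have wnz: "w \<noteq> (\<lambda>_. 0)"
  proof
    assume "w = (\<lambda>_. 0)"
    then have "Gm le w = (\<lambda>_. 0)" using Gm_zero by simp
    then show False using gw by (metis zero_neq_one)
  qed
  have "f_S le w > 0" using pd wnz unfolding pos_def_def by blast
  then have "Bf le w w > 0" unfolding f_Bf by simp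
  then have wsum: "(\<Sum>i\<in>UNIV. w i) > 0" unfolding Bf_def gw by simp
  show ?thesis
  proof (cases "\<forall>i. w i > 0")
    case True
    then have "w \<in> St (f_S le)" using gw by (simp add: St_def pderiv_f)
    then show ?thesis by blast
  next
    case False
    then obtain i where wi: "w i \<le> 0" by (auto simp: not_less)
    have "\<exists>j. w j > 0"
    proof (rule ccontr)
      assume "\<not> (\<exists>j. w j > 0)"
      then have "(\<Sum>i\<in>UNIV. w i) \<le> 0" by (intro sum_nonpos) (auto simp: not_less)
      then show False using wsum by simp
    qed
    then obtain j where wj: "w j > 0" by blast
    have ij: "i \<noteq> j" using wi wj by auto
    define g where "g = (\<lambda>l. (if l = i then w j else 0) + (if l = j then - w i else 0))"
    obtain h where gh: "Gm le h = g" using Gm_surj[OF pd] by blast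
    have gnn: "\<And>l. g l \<ge> 0" unfolding g_def using wi wj by auto
    have gi: "g i > 0" unfolding g_def using ij wj by simp
    have hnz: "h \<noteq> (\<lambda>_. 0)"
    proof
      assume "h = (\<lambda>_. 0)"
      then have "g = (\<lambda>_. 0)" using gh Gm_zero by metis
      then show False using gi by (metis less_irrefl)
    qed
    have "(\<Sum>l\<in>UNIV. h l) = Bf le h w" unfolding Bf_def gw by simp
    also have "\<dots> = Bf le w h" by (rule Bf_sym)
    also have "\<dots> = (\<Sum>l\<in>UNIV. w l * g l)" unfolding Bf_def gh ..
    also have "\<dots> = (\<Sum>l\<in>UNIV. (if l = i then w i * w j else 0) + (if l = j then - (w j * w i) else 0))"
      unfolding g_def by (rule sum.cong[OF refl]) (auto simp: algebra_simps)
    also have "\<dots> = 0" by (simp add: sum.distrib)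
    finally have hs: "(\<Sum>l\<in>UNIV. h l) = 0" .
    have "h \<in> C_set (f_S le)"
      using hs hnz gnn gh by (auto simp: C_set_def H_n_def pderiv_f)
    then show ?thesis using C by blast
  qed
qed


theorem corollary3:
  fixes le :: "'a::finite \<Rightarrow> 'a \<Rightarrow> bool"
  assumes "is_poset le"
    and "hasse_acyclic le"
    and "pos_def (f_S le) \<or> pos_def (tits_form le)"
  shows "pos_def (f_S le) \<and> pos_def (tits_form le)
    \<and> (C_set (f_S le) = {} \<longleftrightarrow> St_tilde (f_S le) \<noteq> {})
    \<and> (St_tilde (f_S le) \<noteq> {} \<longleftrightarrow> St (f_S le) \<noteq> {})"
proof -
  have pd: "pos_def (f_S le)" and pt: "pos_def (tits_form le)"
    using pos_def_equiv[OF assms(1,2)] assms(3) by auto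
  have 1: "C_set (f_S le) = {} \<longleftrightarrow> St_tilde (f_S le) \<noteq> {}"
    using a_to_c[OF pd] c_to_b[OF pd] b_to_a[OF pd] by blast
  have 2: "St_tilde (f_S le) \<noteq> {} \<longleftrightarrow> St (f_S le) \<noteq> {}"
    using a_to_c[OF pd] c_to_b[OF pd] b_to_a[OF pd] by blast
  show ?thesis using pd pt 1 2 by blast
qed

end
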